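(* Let $r=2$ and let $U$ be an $\mathbb{F}_q$-subspace of $\mathbb{F}_{q^n}^2$ with $\dim_{\mathbb{F}_q}U=n$, with determinantal polynomial $F_U(x,y)$. Then the number of zeros of $F_U$ in $\mathrm{PG}(1,q^n)$, counted with multiplicity, equals $\deg F_U=1+q+\dots+q^{n-1}$; i.e. all roots of $F_U$ lie in $\mathrm{PG}(1,q^n)$ ($F_U$ is a product of linear forms over $\mathbb{F}_{q^n}$).
   Context: $q$ a prime power, $n\ge2$. For an $\mathbb{F}_q$-subspace $U$ of $\mathbb{F}_{q^n}^2$, $L_U=\{\langle u\rangle_{\mathbb{F}_{q^n}}:u\in U\setminus\{0\}\}$. Determinantal polynomial: for $u=(u_0,u_1)$ let $\hat u=(u_0,u_1,u_0^q,u_1^q,\dots,u_0^{q^{n-1}},u_1^{q^{n-1}})\in\mathbb{F}_{q^n}^{2n}$; with an $\mathbb{F}_q$-basis $u_1,\dots,u_n$ of $U$, $F_U(x,y)$ is the determinant of the $2n\times 2n$ matrix whose first $n$ rows are $\hat u_1,\dots,\hat u_n$ and whose remaining rows are, for $i=0,\dots,n-1$, the vector with $x^{q^i},y^{q^i}$ in positions $2i,2i+1$ and zeros elsewhere. Its zeros in $\mathrm{PG}(1,q^n)$ are the points of $L_U$. *)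

theory Defs
  imports "HOL-Computational_Algebra.Polynomial" "HOL-Computational_Algebra.Primes"
    "Jordan_Normal_Form.Determinant" "HOL-Library.Product_Plus"
begin

text \<open>The ambient field F_{q^n} is a finite field type 'a with CARD('a) = q^n;
  F_q is its subfield of fixed points of x |-> x^q.\<close>
definition Fq :: "nat \<Rightarrow> ('a::field) set" where
  "Fq q = {x. x ^ q = x}"

definition prime_power :: "nat \<Rightarrow> bool" where
  "prime_power q \<longleftrightarrow> (\<exists>p k. prime p \<and> k > 0 \<and> q = p ^ k)"

definition vscale :: "'a::field \<Rightarrow> 'a \<times> 'a \<Rightarrow> 'a \<times> 'a" where
  "vscale c v = (c * fst v, c * snd v)"

definition Fq_subspace :: "nat \<Rightarrow> ('a::field \<times> 'a) set \<Rightarrow> bool" where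
  "Fq_subspace q U \<longleftrightarrow> 0 \<in> U \<and> (\<forall>v\<in>U. \<forall>w\<in>U. v + w \<in> U)
     \<and> (\<forall>c\<in>Fq q. \<forall>v\<in>U. vscale c v \<in> U)"

definition Fq_basis :: "nat \<Rightarrow> ('a::field \<times> 'a) set \<Rightarrow> nat \<Rightarrow> (nat \<Rightarrow> 'a \<times> 'a) \<Rightarrow> bool" where
  "Fq_basis q U n u \<longleftrightarrow>
     (\<forall>c. (\<forall>i<n. c i \<in> Fq q) \<and> (\<Sum>i<n. vscale (c i) (u i)) = 0 \<longrightarrow> (\<forall>i<n. c i = 0))
     \<and> U = {(\<Sum>i<n. vscale (c i) (u i)) | c. \<forall>i<n. c i \<in> Fq q}"

text \<open>Bivariate polynomials over 'a as 'a poly poly: X is the inner variable,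
  Y the outer variable.\<close>
definition varX :: "'a::comm_ring_1 poly poly" where "varX = [:[:0, 1:]:]"
definition varY :: "'a::comm_ring_1 poly poly" where "varY = [:0, 1:]"

definition const2 :: "'a::comm_ring_1 \<Rightarrow> 'a poly poly" where "const2 c = [:[:c:]:]"

definition comp :: "'a \<times> 'a \<Rightarrow> nat \<Rightarrow> 'a" where
  "comp v j = (if j = 0 then fst v else snd v)"

text \<open>The 2n x 2n determinantal matrix: rows 0..n-1 are hat(u_r), where position
  2i+j holds (u_r)_j^(q^i); row n+i has X^(q^i), Y^(q^i) in positions 2i, 2i+1.\<close>
definition det_matrix :: "nat \<Rightarrow> nat \<Rightarrow> (nat \<Rightarrow> 'a::comm_ring_1 \<times> 'a) \<Rightarrow> 'a poly poly mat" where
  "det_matrix q n u = mat (2*n) (2*n) (\<lambda>(r, c).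
     if r < n then const2 (comp (u r) (c mod 2) ^ (q ^ (c div 2)))
     else if c = 2 * (r - n) then varX ^ (q ^ (r - n))
     else if c = 2 * (r - n) + 1 then varY ^ (q ^ (r - n))
     else 0)"

definition F_U :: "nat \<Rightarrow> nat \<Rightarrow> (nat \<Rightarrow> 'a::comm_ring_1 \<times> 'a) \<Rightarrow> 'a poly poly" where
  "F_U q n u = det (det_matrix q n u)"

text \<open>The linear form b X - a Y vanishing at the point <(a,b)>.\<close>
definition linform :: "'a::comm_ring_1 \<times> 'a \<Rightarrow> 'a poly poly" where
  "linform v = const2 (snd v) * varX - const2 (fst v) * varY"

end

theory Submission
  imports Defs
begin


lemma card_times_zero: "of_nat (card (UNIV :: 'a::{finite,comm_ring_1} set)) = (0::'a)"
proof -
  have "(\<Sum>a\<in>UNIV. a) = (\<Sum>a\<in>UNIV. a + (1::'a))"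
    by (rule sum.reindex_bij_witness[of _ "\<lambda>a. a + 1" "\<lambda>a. a - 1"]) auto
  also have "\<dots> = (\<Sum>a\<in>UNIV. a) + of_nat (card (UNIV :: 'a set))"
    by (simp add: sum.distrib)
  finally show ?thesis by simp
qed

lemma char_eq:
  fixes q n :: nat
  assumes "prime_power q" "n \<ge> 1" "card (UNIV :: 'a::{finite,field} set) = q ^ n"
  shows "\<exists>p k. prime p \<and> k > 0 \<and> q = p ^ k \<and> CHAR('a) = p"
proof -
  obtain p k where pk: "prime p" "k > 0" "q = p ^ k" using assms(1) unfolding prime_power_def by blast
  have pos: "CHAR('a) > 0" by (rule finite_imp_CHAR_pos) simp
  have pr: "prime CHAR('a)" using prime_CHAR_semidom[OF pos] .
  have "CHAR('a) dvd card (UNIV :: 'a set)" using card_times_zero[where 'a='a] of_nat_eq_0_iff_char_dvd by blast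
  then have "CHAR('a) dvd p ^ (k*n)" using assms(3) pk by (simp add: power_mult)
  then have "CHAR('a) dvd p" using pr prime_dvd_power by blast
  then have "CHAR('a) = p" using pr pk(1) by (simp add: primes_dvd_imp_eq)
  then show ?thesis using pk by blast
qed



lemma frob_add:
  assumes "prime CHAR('b::comm_ring_1)" "q = CHAR('b) ^ k"
  shows "((x::'b) + y) ^ (q ^ i) = x ^ (q ^ i) + y ^ (q ^ i)"
  by (rule freshmans_dream'[OF assms(1), of _ "k*i"]) (simp add: assms(2) power_mult)

lemma frob_diff:
  assumes "prime CHAR('b::comm_ring_1)" "q = CHAR('b) ^ k"
  shows "((x::'b) - y) ^ (q ^ i) = x ^ (q ^ i) - y ^ (q ^ i)"
proof -
  have "x ^ (q ^ i) = ((x - y) + y) ^ (q ^ i)" by simp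
  also have "\<dots> = (x - y) ^ (q ^ i) + y ^ (q ^ i)" by (rule frob_add[OF assms])
  finally show ?thesis by simp
qed

lemma frob_sum:
  assumes "prime CHAR('b::comm_ring_1)" "q = CHAR('b) ^ k"
  shows "(sum (f :: _ \<Rightarrow> 'b) A) ^ (q ^ i) = (\<Sum>j\<in>A. f j ^ (q ^ i))"
  by (rule freshmans_dream_sum'[OF assms(1), of _ "k*i"]) (simp add: assms(2) power_mult)

lemma Fq_pow:
  assumes "c \<in> Fq q" shows "c ^ (q ^ i) = c"
proof (induction i)
  case (Suc i)
  have "c ^ (q ^ Suc i) = (c ^ q) ^ (q ^ i)" by (simp add: power_mult[symmetric] mult.commute)
  then show ?case using assms Suc by (simp add: Fq_def)
qed simp

lemma q_ge2:
  fixes p k q :: nat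
  assumes "prime p" "k > 0" "q = p ^ k" shows "q \<ge> 2"
proof -
  have "p ^ 1 \<le> p ^ k" by (rule power_increasing) (use prime_ge_2_nat[OF assms(1)] assms(2) in auto)
  then show ?thesis using assms prime_ge_2_nat[of p] by simp
qed

context
  fixes p k q :: nat
  assumes pr: "prime p" and k: "k > 0" and qdef: "q = p ^ k" and ch: "CHAR('a::{finite,field}) = p"
begin

lemma prC: "prime CHAR('a)" using pr ch by simp
lemma qC: "q = CHAR('a) ^ k" using qdef ch by simp
lemma q2: "q \<ge> 2" using q_ge2[OF pr k qdef] .

lemma Fq_add: "a \<in> Fq q \<Longrightarrow> b \<in> Fq q \<Longrightarrow> (a::'a) + b \<in> Fq q"
  using frob_add[OF prC qC, of a b 1] by (simp add: Fq_def)
lemma Fq_diff: "a \<in> Fq q \<Longrightarrow> b \<in> Fq q \<Longrightarrow> (a::'a) - b \<in> Fq q"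
  using frob_diff[OF prC qC, of a b 1] by (simp add: Fq_def)
lemma Fq_mult: "a \<in> Fq q \<Longrightarrow> b \<in> Fq q \<Longrightarrow> (a::'a) * b \<in> Fq q"
  by (simp add: Fq_def power_mult_distrib)
lemma Fq_0: "(0::'a) \<in> Fq q" using q2 by (simp add: Fq_def)
lemma Fq_1: "(1::'a) \<in> Fq q" by (simp add: Fq_def)
lemma Fq_uminus: "a \<in> Fq q \<Longrightarrow> - (a::'a) \<in> Fq q"
  using Fq_diff[OF Fq_0, of a] by simp

lemma card_Fq_le: "card (Fq q :: 'a set) \<le> q"
proof -
  let ?P = "monom (1::'a) q + [:0,-1:]"
  have d1: "degree [:0,-1::'a:] < degree (monom (1::'a) q)" using q2 by (simp add: degree_monom_eq)
  have dP: "degree ?P = q" using degree_add_eq_left[OF d1] by (simp add: degree_monom_eq)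
  have "?P \<noteq> 0" using dP q2 by auto
  moreover have "Fq q = {x. poly ?P x = (0::'a)}" by (auto simp: Fq_def poly_monom)
  ultimately show ?thesis using card_poly_roots_bound[of ?P] dP by simp
qed

lemma pow_card: "(x::'a) ^ card (UNIV :: 'a set) = x"
proof (cases "x = 0")
  case False
  have "x * (\<Prod>y\<in>UNIV-{0}. x * y) = x * x ^ (card (UNIV :: 'a set) - 1) * \<Prod>(UNIV-{0})"
    by (simp add: prod.distrib mult_ac)
  also have "x * x ^ (card (UNIV :: 'a set) - 1) = x ^ Suc (card (UNIV :: 'a set) - 1)"
    by (subst power_Suc) auto
  also have "Suc (card (UNIV :: 'a set) - 1) = card (UNIV :: 'a set)"
    using finite_UNIV_card_ge_0[where ?'a = 'a] by simp
  also have "(\<Prod>y\<in>UNIV-{0}. x * y) = (\<Prod>y\<in>UNIV-{0}. y)"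
    by (rule prod.reindex_bij_witness[of _ "\<lambda>y. y / x" "\<lambda>y. x * y"]) (use False in auto)
  finally show ?thesis
    by simp
qed (use finite_UNIV_card_ge_0[where ?'a = 'a] in auto)

lemma card_Fq:
  assumes n: "n \<ge> 1" and cardU: "card (UNIV :: 'a set) = q ^ n"
  shows "card (Fq q :: 'a set) = q"
proof -
  define \<phi> :: "'a \<Rightarrow> 'a" where "\<phi> x = x ^ q - x" for x
  have phidiff: "\<phi> (a - b) = \<phi> a - \<phi> b" for a b
    using frob_diff[OF prC qC, of a b 1] by (simp add: \<phi>_def)
  have fib: "{x. \<phi> x = \<phi> y} = (\<lambda>z. z + y) ` Fq q" for y
  proof -
    have "x \<in> {x. \<phi> x = \<phi> y} \<longleftrightarrow> x \<in> (\<lambda>z. z + y) ` Fq q" for x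
    proof
      assume "x \<in> {x. \<phi> x = \<phi> y}"
      then have "\<phi> (x - y) = 0" by (simp add: phidiff)
      then have "x - y \<in> Fq q" by (simp add: \<phi>_def Fq_def)
      then show "x \<in> (\<lambda>z. z + y) ` Fq q" by (rule rev_image_eqI) simp
    next
      assume "x \<in> (\<lambda>z. z + y) ` Fq q"
      then obtain z where z: "z \<in> Fq q" "x = z + y" by blast
      have "\<phi> (x - y) = 0" using z by (simp add: \<phi>_def Fq_def)
      then show "x \<in> {x. \<phi> x = \<phi> y}" by (simp add: phidiff)
    qed
    then show ?thesis by blast
  qed
  have cfib: "card {x. \<phi> x = v} = card (Fq q :: 'a set)" if vr: "v \<in> range \<phi>" for v
  proof -
    obtain y where "v = \<phi> y" using vr by blast
    then show ?thesis using fib[of y] by (simp add: card_image inj_on_def)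
  qed
  have "UNIV = (\<Union>v\<in>range \<phi>. {x. \<phi> x = v})" by blast
  then have "card (UNIV :: 'a set) = card (\<Union>v\<in>range \<phi>. {x. \<phi> x = v})" by simp
  also have "\<dots> = (\<Sum>v\<in>range \<phi>. card {x. \<phi> x = v})"
    by (rule card_UN_disjoint) auto
  also have "\<dots> = card (range \<phi>) * card (Fq q :: 'a set)" using cfib by simp
  finally have cardeq: "q ^ n = card (range \<phi>) * card (Fq q :: 'a set)" using cardU by simp
  define Tp :: "'a poly" where "Tp = (\<Sum>i<n. monom 1 (q ^ i))"
  have qinj: "q ^ i = q ^ j \<longleftrightarrow> i = j" for i j using q2 by (simp add: power_inject_exp)
  have cT: "coeff Tp j = (\<Sum>i<n. if q ^ i = j then 1 else 0)" for j
    by (simp add: Tp_def coeff_sum coeff_monom)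
  have "coeff Tp (q ^ (n - 1)) = 1"
    unfolding cT qinj using n by (simp add: sum.delta)
  then have Tnz: "Tp \<noteq> 0" by auto
  have "degree Tp \<le> q ^ (n - 1)"
  proof (rule degree_le, intro allI impI)
    fix j assume j: "q ^ (n - 1) < j"
    have "q ^ i \<noteq> j" if "i < n" for i
    proof -
      have "q ^ i \<le> q ^ (n - 1)" by (rule power_increasing) (use that q2 in auto)
      then show ?thesis using j by auto
    qed
    then show "coeff Tp j = 0" unfolding cT by (intro sum.neutral) auto
  qed
  have roots: "range \<phi> \<subseteq> {y. poly Tp y = 0}"
  proof clarify
    fix x
    have "poly Tp (\<phi> x) = (\<Sum>i<n. (\<phi> x) ^ (q ^ i))"
      by (simp add: Tp_def poly_sum poly_monom)
    also have "\<dots> = (\<Sum>i<n. x ^ (q ^ Suc i) - x ^ (q ^ i))"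
    proof (rule sum.cong[OF refl])
      fix i
      have "(\<phi> x) ^ (q ^ i) = (x ^ q) ^ (q ^ i) - x ^ (q ^ i)"
        unfolding \<phi>_def by (rule frob_diff[OF prC qC])
      also have "(x ^ q) ^ (q ^ i) = x ^ (q ^ Suc i)" by (simp add: power_mult[symmetric] mult.commute)
      finally show "(\<phi> x) ^ (q ^ i) = x ^ (q ^ Suc i) - x ^ (q ^ i)" .
    qed
    also have "\<dots> = x ^ (q ^ n) - x ^ (q ^ 0)" by (rule sum_lessThan_telescope)
    also have "x ^ (q ^ n) = x" using pow_card[of x] cardU by simp
    finally show "poly Tp (\<phi> x) = 0" by simp
  qed
  have "card (range \<phi>) \<le> card {y. poly Tp y = 0}"
    by (rule card_mono[OF poly_roots_finite[OF Tnz] roots])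
  also have "\<dots> \<le> degree Tp" by (rule card_poly_roots_bound[OF Tnz])
  finally have "card (range \<phi>) \<le> q ^ (n - 1)" using \<open>degree Tp \<le> q ^ (n - 1)\<close> by linarith
  then have "q ^ n \<le> q ^ (n - 1) * card (Fq q :: 'a set)" using cardeq by (simp add: mult_right_mono)
  moreover have "q ^ n = q ^ (n - 1) * q" using n by (simp add: power_Suc2[symmetric])
  ultimately have "q ^ (n - 1) * q \<le> q ^ (n - 1) * card (Fq q :: 'a set)" by simp
  then have "q \<le> card (Fq q :: 'a set)" using q2 by simp
  then show ?thesis using card_Fq_le by simp
qed

end


lemma poly_eq_prod_roots:
  fixes P :: "'b::idom poly"
  assumes dP: "degree P \<le> d" and fS: "finite S" and cS: "card S = d" and rt: "\<forall>s\<in>S. poly P s = 0"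
  shows "P = smult (coeff P d) (\<Prod>s\<in>S. [:-s,1:])"
proof (rule ccontr)
  let ?G = "\<Prod>s\<in>S. [:-s,1:]"
  let ?H = "P - smult (coeff P d) ?G"
  assume ne: "P \<noteq> smult (coeff P d) ?G"
  then have Hnz: "?H \<noteq> 0" by simp
  have dG: "degree ?G = d" using cS by (subst degree_prod_eq_sum_degree) auto
  have lG: "coeff ?G d = 1" using lead_coeff_prod[of "\<lambda>s. [:-s,1:]" S] dG by simp
  have dH: "degree ?H \<le> d" using dP dG by (intro degree_diff_le) auto
  have cH: "coeff ?H d = 0" using lG by simp
  have "degree ?H \<noteq> d" using cH Hnz by (metis leading_coeff_0_iff)
  with dH have dH': "degree ?H < d" by simp
  have "poly ?G x = 0" if "x \<in> S" for x using that fS by (auto simp: poly_prod prod_zero_iff)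
  then have "S \<subseteq> {x. poly ?H x = 0}" using rt by auto
  then have "card S \<le> card {x. poly ?H x = 0}" by (rule card_mono[OF poly_roots_finite[OF Hnz]])
  also have "\<dots> \<le> degree ?H" by (rule card_poly_roots_bound[OF Hnz])
  finally show False using dH' cS by simp
qed

lemma const2_mult: "const2 (a * b) = const2 a * (const2 (b::'b::comm_ring_1))"
  by (simp add: const2_def)
lemma const2_pow: "const2 (a ^ m) = const2 (a::'b::comm_ring_1) ^ m"
  by (induction m) (simp_all add: const2_mult, simp add: const2_def one_pCons)

definition moore :: "nat \<Rightarrow> (nat \<Rightarrow> 'b::comm_ring_1) \<Rightarrow> nat \<Rightarrow> 'b mat" where
  "moore q z k = mat k k (\<lambda>(r,i). z r ^ (q ^ i))"

lemma moore_carrier: "moore q z k \<in> carrier_mat k k" by (simp add: moore_def)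

lemma moore_delete: "mat_delete (moore q z (Suc m)) m m = moore q z m"
  by (rule eq_matI) (auto simp: moore_def mat_delete_def)

lemma moore_delete_upd: "i < Suc m \<Longrightarrow> mat_delete (moore q (z(m := w)) (Suc m)) m i = mat_delete (moore q z (Suc m)) m i"
  by (rule eq_matI) (auto simp: moore_def mat_delete_def)

lemma moore_0: "det (moore q z 0) = 1"
  by (simp add: det_def moore_def)

context
  fixes p k q :: nat
  assumes pr: "prime p" and k: "k > 0" and qdef: "q = p ^ k" and ch: "CHAR('a::{finite,field}) = p"
begin

lemma prR: "prime CHAR('a poly poly)" using pr ch by simp
lemma qR: "q = CHAR('a poly poly) ^ k" using qdef ch by simp

lemma moore_step:
  fixes z :: "nat \<Rightarrow> 'a poly poly"
  assumes inj: "inj_on (\<lambda>c. \<Sum>j<m. const2 (c j) * z j) (PiE {..<m} (\<lambda>_. Fq q :: 'a set))"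
    and cardF: "card (Fq q :: 'a set) = q"
  shows "det (moore q z (Suc m)) = det (moore q z m) *
     (\<Prod>c\<in>PiE {..<m} (\<lambda>_. Fq q :: 'a set). z m - (\<Sum>j<m. const2 (c j) * z j))"
proof -
  define C where "C = PiE {..<m} (\<lambda>_. Fq q :: 'a set)"
  define g where "g c = (\<Sum>j<m. const2 (c j) * z j)" for c
  define A where "A w = moore q (z(m := w)) (Suc m)" for w
  define cof where "cof i = cofactor (moore q z (Suc m)) m i" for i
  define P where "P = (\<Sum>i<Suc m. monom (cof i) (q ^ i))"
  have detA: "det (A w) = (\<Sum>i<Suc m. w ^ (q ^ i) * cof i)" for w
  proof -
    have "det (A w) = (\<Sum>i<Suc m. A w $$ (m, i) * cofactor (A w) m i)"
      by (rule laplace_expansion_row) (auto simp: A_def moore_carrier)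
    also have "\<dots> = (\<Sum>i<Suc m. w ^ (q ^ i) * cof i)"
      by (rule sum.cong[OF refl]) (simp add: A_def cof_def cofactor_def moore_delete_upd, simp add: moore_def)
    finally show ?thesis .
  qed
  have polyP: "poly P w = det (A w)" for w
    by (simp add: P_def poly_sum poly_monom detA mult.commute)
  have q2: "q \<ge> 2" using q_ge2[OF pr k qdef] .
  have qinj: "q ^ i = q ^ j \<longleftrightarrow> i = j" for i j using q2 by (simp add: power_inject_exp)
  have cP: "coeff P j = (\<Sum>i<Suc m. if q ^ i = j then cof i else 0)" for j
    by (simp add: P_def coeff_sum coeff_monom)
  have lead: "coeff P (q ^ m) = det (moore q z m)"
    unfolding cP qinj by (simp add: sum.delta cof_def cofactor_def moore_delete)
  have dP: "degree P \<le> q ^ m"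
  proof (rule degree_le, intro allI impI)
    fix j assume j: "q ^ m < j"
    have "q ^ i \<noteq> j" if "i < Suc m" for i
    proof -
      have "q ^ i \<le> q ^ m" by (rule power_increasing) (use that q2 in auto)
      then show ?thesis using j by auto
    qed
    then show "coeff P j = 0" unfolding cP by (intro sum.neutral) auto
  qed
  have finC: "finite C" by (simp add: C_def finite_PiE)
  have cardC: "card C = q ^ m" by (simp add: C_def card_PiE cardF)
  have cardS: "card (g ` C) = q ^ m" using inj cardC by (simp add: card_image C_def g_def)
  have zero_j: "det (A (z j)) = 0" if "j < m" for j
  proof (rule det_identical_rows[of _ "Suc m" j m])
    show "A (z j) \<in> carrier_mat (Suc m) (Suc m)" by (simp add: A_def moore_carrier)
    show "row (A (z j)) j = row (A (z j)) m"
      by (rule eq_vecI) (use that in \<open>auto simp: A_def moore_def\<close>)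
  qed (use that in auto)
  have roots: "\<forall>s\<in>g ` C. poly P s = 0"
  proof
    fix s assume "s \<in> g ` C"
    then obtain c where c: "c \<in> C" "s = g c" by blast
    have cF: "c j \<in> Fq q" if "j < m" for j using c(1) that by (auto simp: C_def)
    have "poly P s = (\<Sum>i<Suc m. (g c) ^ (q ^ i) * cof i)" using c polyP detA by simp
    also have "\<dots> = (\<Sum>i<Suc m. (\<Sum>j<m. const2 (c j) * z j ^ (q ^ i)) * cof i)"
    proof (rule sum.cong[OF refl])
      fix i
      have "(g c) ^ (q ^ i) = (\<Sum>j<m. (const2 (c j) * z j) ^ (q ^ i))"
        unfolding g_def by (rule frob_sum[OF prR qR])
      also have "\<dots> = (\<Sum>j<m. const2 (c j) * z j ^ (q ^ i))"
        by (rule sum.cong[OF refl]) (simp add: power_mult_distrib const2_pow[symmetric] Fq_pow cF)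
      finally show "(g c) ^ (q ^ i) * cof i = (\<Sum>j<m. const2 (c j) * z j ^ (q ^ i)) * cof i" by simp
    qed
    also have "\<dots> = (\<Sum>i<Suc m. \<Sum>j<m. const2 (c j) * (z j ^ (q ^ i) * cof i))"
      by (simp only: sum_distrib_right mult.assoc)
    also have "\<dots> = (\<Sum>j<m. \<Sum>i<Suc m. const2 (c j) * (z j ^ (q ^ i) * cof i))"
      by (rule sum.swap)
    also have "\<dots> = (\<Sum>j<m. const2 (c j) * (\<Sum>i<Suc m. z j ^ (q ^ i) * cof i))"
      by (simp only: sum_distrib_left)
    also have "\<dots> = (\<Sum>j<m. const2 (c j) * det (A (z j)))" by (simp add: detA)
    also have "\<dots> = 0" using zero_j by simp
    finally show "poly P s = 0" .
  qed
  have Peq: "P = smult (coeff P (q ^ m)) (\<Prod>s\<in>g ` C. [:-s,1:])"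
    by (rule poly_eq_prod_roots[OF dP _ cardS roots]) (simp add: finC)
  have "det (moore q z (Suc m)) = poly P (z m)" by (simp add: polyP A_def)
  also have "\<dots> = det (moore q z m) * (\<Prod>s\<in>g ` C. z m - s)"
    by (subst Peq) (simp add: lead poly_prod)
  also have "(\<Prod>s\<in>g ` C. z m - s) = (\<Prod>c\<in>C. z m - g c)"
    using inj by (simp add: prod.reindex C_def g_def)
  finally show ?thesis by (simp add: C_def g_def)
qed

end


lemma mult_entry:
  assumes "A \<in> carrier_mat N N" "B \<in> carrier_mat N N" "i < N" "j < N"
  shows "(A * B) $$ (i, j) = (\<Sum>l<N. A $$ (i, l) * B $$ (l, j))"
  using assms by (auto simp: scalar_prod_def lessThan_atLeast0 intro!: sum.cong)

lemma sum_two: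
  fixes f :: "nat \<Rightarrow> 'b::comm_ring_1"
  assumes "a < N" "b < N" "a \<noteq> b"
  shows "(\<Sum>j<N. f j * (if j = a then x else if j = b then y else 0)) = f a * x + f b * y"
proof -
  have "(\<Sum>j<N. f j * (if j = a then x else if j = b then y else 0))
      = (\<Sum>j<N. (if j = a then f j * x else 0) + (if j = b then f j * y else 0))"
    by (rule sum.cong[OF refl]) (use assms in auto)
  also have "\<dots> = f a * x + f b * y" using assms by (simp add: sum.distrib)
  finally show ?thesis .
qed

lemma sum_one:
  fixes f :: "nat \<Rightarrow> 'b::comm_ring_1"
  assumes "a < N"
  shows "(\<Sum>j<N. f j * (if j = a then 1 else 0)) = f a"
proof -
  have "(\<Sum>j<N. f j * (if j = a then 1 else 0)) = (\<Sum>j<N. if j = a then f j else 0)"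
    by (rule sum.cong[OF refl]) auto
  then show ?thesis using assms by simp
qed

lemma prod_even:
  fixes n :: nat and g :: "nat \<Rightarrow> 'b::comm_monoid_mult"
  shows "(\<Prod>c<2*n. if even c then g (c div 2) else (1::'b::comm_monoid_mult)) = (\<Prod>i<n. g i)"
proof (induction n)
  case (Suc n)
  have e: "2 * Suc n = Suc (Suc (2 * n))" by simp
  show ?case unfolding e using Suc by simp
qed simp

definition Bm :: "nat \<Rightarrow> nat \<Rightarrow> 'a::comm_ring_1 poly poly mat" where
  "Bm q n = mat (2*n) (2*n) (\<lambda>(j,c). if even c then
     (if j = c then varY ^ (q ^ (c div 2)) else if j = c + 1 then - (varX ^ (q ^ (c div 2))) else 0)
     else (if j = c then 1 else 0))"

definition sig :: "nat \<Rightarrow> nat \<Rightarrow> nat" where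
  "sig n c = (if c < n then 2 * c else 2 * (c - n) + 1)"

definition Pm :: "nat \<Rightarrow> 'a::comm_ring_1 poly poly mat" where
  "Pm n = mat (2*n) (2*n) (\<lambda>(j,c). if j = sig n c then 1 else 0)"

definition Qm :: "nat \<Rightarrow> nat \<Rightarrow> 'a::comm_ring_1 poly poly mat" where
  "Qm q n = mat (2*n) (2*n) (\<lambda>(j,c). Bm q n $$ (j, sig n c))"

lemma sig_lt: "c < 2 * n \<Longrightarrow> sig n c < 2 * n" by (auto simp: sig_def)
lemma sig_inj: "a < 2 * n \<Longrightarrow> b < 2 * n \<Longrightarrow> sig n a = sig n b \<Longrightarrow> a = b"
  by (auto simp: sig_def split: if_splits) presburger+

lemma BP: "Bm q n * Pm n = Qm q n"
proof (rule eq_matI)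
  fix i j assume ij: "i < dim_row (Qm q n)" "j < dim_col (Qm q n)"
  then have ij': "i < 2*n" "j < 2*n" by (auto simp: Qm_def)
  have "(Bm q n * Pm n) $$ (i, j) = (\<Sum>l<2*n. Bm q n $$ (i, l) * Pm n $$ (l, j))"
    by (rule mult_entry) (auto simp: Bm_def Pm_def ij')
  also have "\<dots> = (\<Sum>l<2*n. Bm q n $$ (i, l) * (if l = sig n j then 1 else 0))"
    by (rule sum.cong[OF refl]) (use ij' in \<open>simp add: Pm_def\<close>)
  also have "\<dots> = Bm q n $$ (i, sig n j)" by (rule sum_one[OF sig_lt[OF ij'(2)]])
  finally show "(Bm q n * Pm n) $$ (i, j) = Qm q n $$ (i, j)" using ij' by (simp add: Qm_def)
qed (auto simp: Bm_def Pm_def Qm_def)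

lemma det_Bm: "det (Bm q n :: 'a::idom poly poly mat) = (\<Prod>i<n. varY ^ (q ^ i))"
proof -
  have "det (Bm q n :: 'a poly poly mat) = prod_list (diag_mat (Bm q n))"
    by (rule det_lower_triangular[of "2*n"]) (auto simp: Bm_def)
  also have "\<dots> = (\<Prod>c<2*n. if even c then varY ^ (q ^ (c div 2)) else 1)"
    by (simp add: diag_mat_def Bm_def prod.distinct_set_conv_list[symmetric] lessThan_atLeast0 cong: if_cong)
  also have "\<dots> = (\<Prod>i<n. varY ^ (q ^ i))" by (rule prod_even)
  finally show ?thesis .
qed

lemma det_Pm: "det (Pm n :: 'a::idom poly poly mat) = 1 \<or> det (Pm n :: 'a poly poly mat) = -1"
proof -
  have "transpose_mat (Pm n) * Pm n = (1\<^sub>m (2*n) :: 'a poly poly mat)"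
  proof (rule eq_matI)
    fix a b assume ab: "a < dim_row (1\<^sub>m (2*n) :: 'a poly poly mat)" "b < dim_col (1\<^sub>m (2*n) :: 'a poly poly mat)"
    then have ab': "a < 2*n" "b < 2*n" by auto
    have "(transpose_mat (Pm n) * Pm n) $$ (a, b) = (\<Sum>l<2*n. transpose_mat (Pm n) $$ (a, l) * Pm n $$ (l, b))"
      by (rule mult_entry) (auto simp: Pm_def ab')
    also have "\<dots> = (\<Sum>l<2*n. (if l = sig n a then 1 else 0) * (if l = sig n b then 1 else 0))"
      by (rule sum.cong[OF refl]) (use ab' in \<open>simp add: Pm_def\<close>)
    also have "\<dots> = (\<Sum>l<2*n. (if l = sig n b then 1 else 0) * (if l = sig n a then 1 else 0))"
      by (simp add: mult.commute)
    also have "\<dots> = (if sig n a = sig n b then 1 else 0)" using sum_one[OF sig_lt[OF ab'(1)], of "\<lambda>l. if l = sig n b then 1 else 0"] by simp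
    also have "\<dots> = (1\<^sub>m (2*n) :: 'a poly poly mat) $$ (a, b)" using sig_inj[OF ab'] ab' by auto
    finally show "(transpose_mat (Pm n) * Pm n) $$ (a, b) = (1\<^sub>m (2*n) :: 'a poly poly mat) $$ (a, b)" .
  qed (auto simp: Pm_def)
  then have "det (transpose_mat (Pm n) * (Pm n :: 'a poly poly mat)) = 1" by (simp add: det_one)
  then have "det (Pm n) * det (Pm n :: 'a poly poly mat) = 1"
    by (subst (asm) det_mult[of _ "2*n"]) (auto simp: Pm_def det_transpose[of _ "2*n"])
  then show ?thesis using square_eq_1_iff by blast
qed



definition Mneg :: "nat \<Rightarrow> nat \<Rightarrow> (nat \<Rightarrow> 'a::comm_ring_1 \<times> 'a) \<Rightarrow> 'a poly poly mat" where
  "Mneg q n u = mat n n (\<lambda>(r,i). - (linform (u r) ^ (q ^ i)))"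
definition U1 :: "nat \<Rightarrow> nat \<Rightarrow> (nat \<Rightarrow> 'a::comm_ring_1 \<times> 'a) \<Rightarrow> 'a poly poly mat" where
  "U1 q n u = mat n n (\<lambda>(r,i). const2 (snd (u r) ^ (q ^ i)))"
definition Dg :: "nat \<Rightarrow> nat \<Rightarrow> 'a::comm_ring_1 poly poly mat" where
  "Dg q n = mat n n (\<lambda>(r,i). if r = i then varY ^ (q ^ i) else 0)"

lemma det_Dg: "det (Dg q n :: 'a::idom poly poly mat) = (\<Prod>i<n. varY ^ (q ^ i))"
proof -
  have "det (Dg q n :: 'a poly poly mat) = prod_list (diag_mat (Dg q n))"
    by (rule det_lower_triangular[of n]) (auto simp: Dg_def)
  also have "\<dots> = (\<Prod>i<n. varY ^ (q ^ i))"
    by (simp add: diag_mat_def Dg_def prod.distinct_set_conv_list[symmetric] lessThan_atLeast0)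
  finally show ?thesis .
qed

lemma Mneg_moore: "Mneg q n u = (-1) \<cdot>\<^sub>m moore q (\<lambda>r. linform (u r)) n"
  by (rule eq_matI) (auto simp: Mneg_def moore_def)

lemma const2_one: "const2 1 = (1::'b::comm_ring_1 poly poly)" by (simp add: const2_def one_pCons)
lemma const2_neg1: "const2 (-1) = (-1::'b::comm_ring_1 poly poly)" by (simp add: const2_def one_pCons)

context
  fixes p k q :: nat
  assumes pr: "prime p" and k: "k > 0" and qdef: "q = p ^ k" and ch: "CHAR('a::{finite,field}) = p"
begin

lemma linform_pow: "(linform (v :: 'a \<times> 'a)) ^ (q ^ i)
   = const2 (snd v ^ (q ^ i)) * varX ^ (q ^ i) - const2 (fst v ^ (q ^ i)) * varY ^ (q ^ i)"
  unfolding linform_def frob_diff[OF prR[OF pr k qdef ch] qR[OF pr k qdef ch]]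
  by (simp add: power_mult_distrib const2_pow)

lemma AQ: "det_matrix q n (u :: nat \<Rightarrow> 'a \<times> 'a) * Qm q n = four_block_mat (Mneg q n u) (U1 q n u) (0\<^sub>m n n) (Dg q n)"
proof (rule eq_matI)
  fix r c assume rc: "r < dim_row (four_block_mat (Mneg q n u) (U1 q n u) (0\<^sub>m n n) (Dg q n))"
       "c < dim_col (four_block_mat (Mneg q n u) (U1 q n u) (0\<^sub>m n n) (Dg q n))"
  then have r: "r < 2*n" and c: "c < 2*n" by (auto simp: Mneg_def Dg_def)
  let ?A = "det_matrix q n u"
  have Aent: "?A $$ (r, l) = (if r < n then const2 (comp (u r) (l mod 2) ^ (q ^ (l div 2)))
     else if l = 2 * (r - n) then varX ^ (q ^ (r - n))
     else if l = 2 * (r - n) + 1 then varY ^ (q ^ (r - n)) else 0)" if "l < 2*n" for l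
    using r that by (simp add: det_matrix_def)
  have prod: "(?A * Qm q n) $$ (r, c) = (\<Sum>l<2*n. ?A $$ (r, l) * Qm q n $$ (l, c))"
    by (rule mult_entry) (auto simp: det_matrix_def Qm_def r c)
  have FB: "four_block_mat (Mneg q n u) (U1 q n u) (0\<^sub>m n n) (Dg q n) $$ (r, c) =
     (if r < n then if c < n then Mneg q n u $$ (r, c) else U1 q n u $$ (r, c - n)
      else if c < n then 0 else Dg q n $$ (r - n, c - n))"
    using r c by (simp add: Mneg_def Dg_def)
  show "(?A * Qm q n) $$ (r, c) = four_block_mat (Mneg q n u) (U1 q n u) (0\<^sub>m n n) (Dg q n) $$ (r, c)"
  proof (cases "c < n")
    case True
    have "(?A * Qm q n) $$ (r, c) = (\<Sum>l<2*n. ?A $$ (r, l) *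
        (if l = 2*c then varY ^ (q ^ c) else if l = 2*c + 1 then - (varX ^ (q ^ c)) else 0))"
      unfolding prod by (rule sum.cong[OF refl]) (use True c in \<open>auto simp: Qm_def Bm_def sig_def\<close>)
    also have "\<dots> = ?A $$ (r, 2*c) * varY ^ (q ^ c) + ?A $$ (r, 2*c+1) * (- (varX ^ (q ^ c)))"
      by (rule sum_two) (use True in auto)
    also have "\<dots> = four_block_mat (Mneg q n u) (U1 q n u) (0\<^sub>m n n) (Dg q n) $$ (r, c)"
    proof (cases "r < n")
      case True
      have a1: "?A $$ (r, l) = const2 (fst (u r) ^ (q^c))" if "l = 2*c" for l
      proof -
        have "l mod 2 = 0" "l div 2 = c" "l < 2*n" using that \<open>c < n\<close> by auto
        then show ?thesis using Aent[of l] True by (simp add: comp_def)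
      qed
      have a2: "?A $$ (r, l) = const2 (snd (u r) ^ (q^c))" if "l = 2*c+1" for l
      proof -
        have "l mod 2 = 1" "l div 2 = c" "l < 2*n" using that \<open>c < n\<close> by auto
        then show ?thesis using Aent[of l] True by (simp add: comp_def)
      qed
      show ?thesis using \<open>c < n\<close> True unfolding FB a1[OF refl] a2[OF refl]
        by (simp add: Mneg_def linform_pow algebra_simps)
    next
      case False
      then show ?thesis using \<open>c < n\<close> unfolding FB
        by (auto simp: Aent mult.commute)
    qed
    finally show ?thesis .
  next
    case False
    have "(?A * Qm q n) $$ (r, c) = (\<Sum>l<2*n. ?A $$ (r, l) * (if l = 2*(c-n)+1 then 1 else 0))"
      unfolding prod by (rule sum.cong[OF refl]) (use False c in \<open>auto simp: Qm_def Bm_def sig_def\<close>)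
    also have "\<dots> = ?A $$ (r, 2*(c-n)+1)" by (rule sum_one) (use False c in auto)
    also have "\<dots> = four_block_mat (Mneg q n u) (U1 q n u) (0\<^sub>m n n) (Dg q n) $$ (r, c)"
    proof (cases "r < n")
      case True
      then show ?thesis using \<open>\<not> c < n\<close> c unfolding FB
        by (simp add: Aent comp_def U1_def)
    next
      case False
      then show ?thesis using \<open>\<not> c < n\<close> c r unfolding FB
        by (auto simp: Aent Dg_def)
    qed
    finally show ?thesis .
  qed
qed (auto simp: det_matrix_def Qm_def Mneg_def Dg_def)

lemma F_U_moore: "\<exists>e. e \<noteq> (0::'a) \<and> F_U q n u = const2 e * det (moore q (\<lambda>r. linform (u r)) n)"
proof -
  let ?A = "det_matrix q n u"
  let ?M = "det (moore q (\<lambda>r. linform (u r)) n)"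
  let ?y = "\<Prod>i<n. varY ^ (q ^ i) :: 'a poly poly"
  let ?d = "det (Pm n :: 'a poly poly mat)"
  have Ac: "?A \<in> carrier_mat (2*n) (2*n)" by (simp add: det_matrix_def)
  have "det ?A * det (Qm q n) = det (?A * Qm q n)"
    by (rule det_mult[symmetric, OF Ac]) (simp add: Qm_def)
  also have "\<dots> = det (Mneg q n u) * det (Dg q n)"
    unfolding AQ by (rule det_four_block_mat_lower_left_zero) (auto simp: Mneg_def U1_def Dg_def)
  finally have e1: "det ?A * det (Qm q n) = det (Mneg q n u) * det (Dg q n)" .
  have "det (Qm q n :: 'a poly poly mat) = det (Bm q n) * ?d"
    unfolding BP[symmetric] by (rule det_mult) (auto simp: Bm_def Pm_def)
  then have "det (Qm q n :: 'a poly poly mat) = ?y * ?d" by (simp add: det_Bm)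
  moreover have "det (Mneg q n u) = (-1) ^ n * ?M"
    unfolding Mneg_moore by (simp add: moore_def)
  ultimately have "(det ?A * ?d) * ?y = ((-1) ^ n * ?M) * ?y"
    using e1 by (simp add: det_Dg mult_ac)
  moreover have "?y \<noteq> 0" by (simp add: varY_def)
  ultimately have e2: "det ?A * ?d = (-1) ^ n * ?M" by simp
  have dd: "?d * ?d = 1" using det_Pm[where 'a='a, of n] by auto
  have "det ?A = det ?A * ?d * ?d" using dd by (simp add: mult.assoc)
  also have "\<dots> = ((-1) ^ n * ?d) * ?M" using e2 by (simp add: mult_ac)
  finally have e3: "det ?A = ((-1) ^ n * ?d) * ?M" .
  define e :: 'a where "e = (-1) ^ n * (if ?d = 1 then 1 else -1)"
  have "const2 e = (-1) ^ n * ?d"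
    using det_Pm[where 'a='a, of n] by (auto simp: e_def const2_mult const2_pow const2_neg1 const2_one)
  moreover have "e \<noteq> 0" by (simp add: e_def)
  ultimately show ?thesis using e3 by (auto simp: F_U_def)
qed

end


lemma const2_add: "const2 (a + b) = const2 a + (const2 b :: 'b::comm_ring_1 poly poly)" by (simp add: const2_def)
lemma const2_diff: "const2 (a - b) = const2 a - (const2 b :: 'b::comm_ring_1 poly poly)" by (simp add: const2_def)
lemma const2_0: "const2 0 = (0 :: 'b::comm_ring_1 poly poly)" by (simp add: const2_def)

lemma linform_add: "linform (v + w) = linform v + (linform w :: 'b::comm_ring_1 poly poly)"
  by (simp add: linform_def const2_add algebra_simps)
lemma linform_diff: "linform (v - w) = linform v - (linform w :: 'b::comm_ring_1 poly poly)"
  by (simp add: linform_def const2_diff algebra_simps)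
lemma linform_0: "linform 0 = (0 :: 'b::comm_ring_1 poly poly)"
  by (simp add: linform_def const2_0)
lemma linform_vscale: "linform (vscale a v) = const2 a * (linform v :: 'b::field poly poly)"
  by (simp add: linform_def vscale_def const2_mult algebra_simps)
lemma linform_sum: "linform (sum f A) = (\<Sum>x\<in>A. linform (f x) :: 'b::comm_ring_1 poly poly)"
  by (induction A rule: infinite_finite_induct) (simp_all add: linform_0 linform_add)

lemma linform_coeffs:
  "coeff (coeff (linform v) 0) 1 = snd (v :: 'b::comm_ring_1 \<times> 'b)"
  "coeff (coeff (linform v) 1) 0 = - fst (v :: 'b::comm_ring_1 \<times> 'b)"
  by (simp_all add: linform_def const2_def varX_def varY_def)

lemma linform_zero: "linform v = (0 :: 'b::comm_ring_1 poly poly) \<Longrightarrow> v = 0"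
  using linform_coeffs[of v] by (cases v) (simp add: zero_prod_def)

lemma linform_inj: "linform v = (linform w :: 'b::comm_ring_1 poly poly) \<Longrightarrow> v = w"
  using linform_zero[of "v - w"] by (simp add: linform_diff)

lemma vscale_0: "vscale 0 v = (0 :: 'b::field \<times> 'b)" by (simp add: vscale_def zero_prod_def)
lemma vscale_1: "vscale 1 v = (v :: 'b::field \<times> 'b)" by (simp add: vscale_def)
lemma vscale_neg: "vscale (- a) v = - vscale a (v :: 'b::field \<times> 'b)" by (simp add: vscale_def)
lemma vscale_diff: "vscale (a - b) v = vscale a v - vscale b (v :: 'b::field \<times> 'b)"
  by (simp add: vscale_def algebra_simps)

lemma sum_restrict:
  fixes l n :: nat
  assumes "l \<le> n"
  shows "(\<Sum>i<n. vscale (if i < l then a i else 0) (u i)) = (\<Sum>i<l. vscale (a i) (u i) :: 'b::field \<times> 'b)"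
proof -
  have "(\<Sum>i<n. vscale (if i < l then a i else 0) (u i)) = (\<Sum>i<l. vscale (if i < l then a i else 0) (u i) :: 'b \<times> 'b)"
    by (rule sum.mono_neutral_right) (use assms in \<open>auto simp: vscale_0\<close>)
  also have "\<dots> = (\<Sum>i<l. vscale (a i) (u i))" by (rule sum.cong) auto
  finally show ?thesis .
qed

lemma sum_restrict2:
  fixes l n :: nat
  assumes "l < n"
  shows "(\<Sum>i<n. vscale (if i < l then - a i else if i = l then 1 else 0) (u i))
     = u l - (\<Sum>i<l. vscale (a i) (u i) :: 'b::field \<times> 'b)"
proof -
  let ?d = "\<lambda>i. if i < l then - a i else if i = l then 1 else (0::'b)"
  have "(\<Sum>i<n. vscale (?d i) (u i)) = (\<Sum>i<Suc l. vscale (?d i) (u i))"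
    by (rule sum.mono_neutral_right) (use assms in \<open>auto simp: vscale_0\<close>)
  also have "\<dots> = (\<Sum>i<l. vscale (?d i) (u i)) + vscale 1 (u l)" by simp
  also have "(\<Sum>i<l. vscale (?d i) (u i)) = (\<Sum>i<l. - vscale (a i) (u i))"
    by (rule sum.cong) (auto simp: vscale_neg)
  finally show ?thesis by (simp add: vscale_1 sum_negf)
qed

context
  fixes p k q n :: nat and u :: "nat \<Rightarrow> 'a::{finite,field} \<times> 'a"
  assumes pr: "prime p" and k: "k > 0" and qdef: "q = p ^ k" and ch: "CHAR('a) = p"
    and indep: "\<And>c. (\<forall>i<n. c i \<in> Fq q) \<Longrightarrow> (\<Sum>i<n. vscale (c i) (u i)) = 0 \<Longrightarrow> (\<forall>i<n. c i = 0)"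
begin

definition CC :: "nat \<Rightarrow> (nat \<Rightarrow> 'a) set" where "CC l = PiE {..<l} (\<lambda>_. Fq q)"
definition ww :: "nat \<Rightarrow> (nat \<Rightarrow> 'a) \<Rightarrow> 'a \<times> 'a" where
  "ww l c = u l - (\<Sum>j<l. vscale (c j) (u j))"

lemma CC_fin: "finite (CC l)" by (simp add: CC_def finite_PiE)
lemma CC_card: "card (Fq q :: 'a set) = q \<Longrightarrow> card (CC l) = q ^ l" by (simp add: CC_def card_PiE)

lemma ww_nz: "l < n \<Longrightarrow> c \<in> CC l \<Longrightarrow> ww l c \<noteq> 0"
proof
  assume l: "l < n" and c: "c \<in> CC l" and z: "ww l c = 0"
  let ?d = "\<lambda>i. if i < l then - c i else if i = l then 1 else (0::'a)"
  have "\<forall>i<n. ?d i \<in> Fq q"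
    using c Fq_uminus[OF pr k qdef ch] Fq_0[OF pr k qdef ch] Fq_1[OF pr k qdef ch] by (auto simp: CC_def)
  moreover have "(\<Sum>i<n. vscale (?d i) (u i)) = 0" using z l by (simp add: sum_restrict2 ww_def)
  ultimately have "\<forall>i<n. ?d i = 0" by (rule indep)
  then show False using l by auto
qed

lemma g_inj: "l \<le> n \<Longrightarrow> inj_on (\<lambda>c. \<Sum>j<l. const2 (c j) * linform (u j)) (CC l)"
proof (rule inj_onI)
  fix c c' assume l: "l \<le> n" and c: "c \<in> CC l" and c': "c' \<in> CC l"
    and eq: "(\<Sum>j<l. const2 (c j) * linform (u j)) = (\<Sum>j<l. const2 (c' j) * linform (u j))"
  have "linform (\<Sum>j<l. vscale (c j) (u j)) = linform (\<Sum>j<l. vscale (c' j) (u j))"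
    using eq by (simp add: linform_sum linform_vscale)
  then have "(\<Sum>j<l. vscale (c j) (u j)) = (\<Sum>j<l. vscale (c' j) (u j))" by (rule linform_inj)
  then have "(\<Sum>j<l. vscale (c j - c' j) (u j)) = 0" by (simp add: vscale_diff sum_subtractf)
  then have z: "(\<Sum>i<n. vscale (if i < l then c i - c' i else 0) (u i)) = 0" using l by (simp add: sum_restrict)
  have "\<forall>i<n. (if i < l then c i - c' i else 0) \<in> Fq q"
    using c c' Fq_diff[OF pr k qdef ch] Fq_0[OF pr k qdef ch] by (auto simp: CC_def)
  then have "\<forall>i<n. (if i < l then c i - c' i else 0) = 0" using z by (rule indep)
  then have "\<And>i. i \<in> {..<l} \<Longrightarrow> c i = c' i" using l by (metis eq_iff_diff_eq_0 lessThan_iff order_less_le_trans)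
  then show "c = c'" using c c' unfolding CC_def by (rule PiE_ext[rotated 2])
qed

lemma moore_prod:
  assumes cardF: "card (Fq q :: 'a set) = q"
  shows "m \<le> n \<Longrightarrow> det (moore q (\<lambda>r. linform (u r)) m) = (\<Prod>l<m. \<Prod>c\<in>CC l. linform (ww l c))"
proof (induction m)
  case 0
  then show ?case by (simp add: moore_0)
next
  case (Suc m)
  have "det (moore q (\<lambda>r. linform (u r)) (Suc m)) = det (moore q (\<lambda>r. linform (u r)) m) *
     (\<Prod>c\<in>CC m. linform (u m) - (\<Sum>j<m. const2 (c j) * linform (u j)))"
    using moore_step[OF pr k qdef ch g_inj[of m, unfolded CC_def] cardF] Suc.prems by (simp add: CC_def)
  also have "(\<Prod>c\<in>CC m. linform (u m) - (\<Sum>j<m. const2 (c j) * linform (u j))) = (\<Prod>c\<in>CC m. linform (ww m c))"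
    by (simp add: ww_def linform_diff linform_sum linform_vscale)
  finally show ?case using Suc by simp
qed

end


theorem mainTheorem3:
  fixes q n :: nat and U :: "('a::{finite,field} \<times> 'a) set" and u :: "nat \<Rightarrow> 'a \<times> 'a"
  assumes "prime_power q" and "n \<ge> 2" and "card (UNIV :: 'a set) = q ^ n"
    and "Fq_subspace q U" and "Fq_basis q U n u"
  shows "\<exists>c (pts :: ('a \<times> 'a) list). c \<noteq> 0 \<and> (\<forall>v\<in>set pts. v \<noteq> (0, 0))
           \<and> length pts = (\<Sum>i<n. q ^ i)
           \<and> F_U q n u = const2 c * (\<Prod>v\<leftarrow>pts. linform v)"
proof -
  have n1: "n \<ge> 1" using assms(2) by simp
  obtain p k where pk: "prime p" "k > 0" "q = p ^ k" "CHAR('a) = p"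
    using char_eq[OF assms(1) n1 assms(3)] by blast
  have cardF: "card (Fq q :: 'a set) = q" using card_Fq[OF pk n1 assms(3)] .
  have indep: "\<And>c. (\<forall>i<n. c i \<in> Fq q) \<Longrightarrow> (\<Sum>i<n. vscale (c i) (u i)) = 0 \<Longrightarrow> (\<forall>i<n. c i = 0)"
    using assms(5) unfolding Fq_basis_def by blast
  obtain e where e: "e \<noteq> 0" "F_U q n u = const2 e * det (moore q (\<lambda>r. linform (u r)) n)"
    using F_U_moore[OF pk, of n u] by blast
  have M: "det (moore q (\<lambda>r. linform (u r)) n) = (\<Prod>l<n. \<Prod>c\<in>CC q l. linform (ww u l c))"
    using moore_prod[OF pk indep cardF order.refl] by simp
  define I :: "(nat \<times> (nat \<Rightarrow> 'a)) set" where "I = Sigma {..<n} (CC q)"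
  have finCC: "finite (CC q l :: (nat \<Rightarrow> 'a) set)" for l by (rule CC_fin[OF pk indep])
  have finI: "finite I" unfolding I_def by (rule finite_SigmaI) (auto simp: finCC)
  have M2: "(\<Prod>l<n. \<Prod>c\<in>CC q l. linform (ww u l c)) = (\<Prod>x\<in>I. linform (ww u (fst x) (snd x)))"
    unfolding I_def by (subst prod.Sigma) (auto simp: finCC split_beta)
  obtain xs where xs: "distinct xs" "set xs = I" using finite_distinct_list[OF finI] by blast
  define pts where "pts = map (\<lambda>x. ww u (fst x) (snd x)) xs"
  have "length pts = card I" using distinct_card[OF xs(1)] xs(2) by (simp add: pts_def)
  also have "\<dots> = (\<Sum>l<n. card (CC q l :: (nat \<Rightarrow> 'a) set))" by (simp add: I_def finCC)
  also have "\<dots> = (\<Sum>l<n. q ^ l)" using CC_card[OF pk indep cardF] by simp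
  finally have len: "length pts = (\<Sum>i<n. q ^ i)" .
  have prodeq: "(\<Prod>v\<leftarrow>pts. linform v) = (\<Prod>x\<in>I. linform (ww u (fst x) (snd x)))"
    using prod.distinct_set_conv_list[OF xs(1), of "\<lambda>x. linform (ww u (fst x) (snd x))"] xs(2)
    by (simp add: pts_def o_def)
  have nz: "\<forall>v\<in>set pts. v \<noteq> (0, 0)"
  proof
    fix v assume "v \<in> set pts"
    then obtain l c where "(l, c) \<in> I" "v = ww u l c" using xs by (auto simp: pts_def)
    then have "l < n" "c \<in> CC q l" "v = ww u l c" by (auto simp: I_def)
    then show "v \<noteq> (0, 0)" using ww_nz[OF pk indep] by (metis zero_prod_def)
  qed
  show ?thesis
    by (rule exI[of _ e], rule exI[of _ pts]) (use e nz len prodeq M M2 in simp)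
qed


end
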